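(* Let $\alpha>0$, $A>0$ and $a\ge1$. Then for all $\lambda>0$, \[ \#\{k\ge1:\lambda_k(R^A_a,\alpha)\le\lambda\}\le\frac{\lambda A}{\pi^2}+\frac{(\lambda A)^{1/2}}{\pi}\Big(a+\frac1a\Big)+1. \]
   Context: For a bounded open set $\Omega\subset\mathbb{R}^2$ with Lipschitz boundary and $\alpha>0$, $\lambda_1(\Omega,\alpha)\le\lambda_2(\Omega,\alpha)\le\cdots$ denote the eigenvalues, counted with multiplicity, of the Robin Laplacian $-\Delta u=\lambda u$, $\partial_\nu u+\alpha u=0$ on $\partial\Omega$ (defined via the form $\int_\Omega\nabla u\cdot\overline{\nabla v}+\alpha\int_{\partial\Omega}u\overline v$ on $H^1(\Omega)$). $R^A_a$ is a rectangle with side lengths $A^{1/2}a$ and $A^{1/2}/a$. *)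

theory Defs
  imports "HOL-Analysis.Analysis"
begin

text \<open>Closed rectangle with side lengths l1, l2 (position is irrelevant).\<close>
definition rect :: "real \<Rightarrow> real \<Rightarrow> (real \<times> real) set" where
  "rect l1 l2 = {0..l1} \<times> {0..l2}"

text \<open>Restrictions of C^1 functions on the plane: a dense core of H^1 of the rectangle.\<close>
definition C1_fun :: "(real \<times> real \<Rightarrow> real) \<Rightarrow> bool" where
  "C1_fun u \<longleftrightarrow> (\<exists>gx gy. continuous_on UNIV gx \<and> continuous_on UNIV gy \<and>
     (\<forall>x. (u has_derivative (\<lambda>h. gx x * fst h + gy x * snd h)) (at x)))"

definition grad_sq :: "(real \<times> real \<Rightarrow> real) \<Rightarrow> real \<times> real \<Rightarrow> real" where
  "grad_sq u x = (frechet_derivative u (at x) (1,0))\<^sup>2 + (frechet_derivative u (at x) (0,1))\<^sup>2"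

definition robin_form :: "real \<Rightarrow> real \<Rightarrow> real \<Rightarrow> (real \<times> real \<Rightarrow> real) \<Rightarrow> real" where
  "robin_form l1 l2 \<alpha> u =
     integral (rect l1 l2) (grad_sq u)
     + \<alpha> * (integral {0..l1} (\<lambda>t. (u (t,0))\<^sup>2 + (u (t,l2))\<^sup>2)
            + integral {0..l2} (\<lambda>t. (u (0,t))\<^sup>2 + (u (l1,t))\<^sup>2))"

definition l2sq :: "real \<Rightarrow> real \<Rightarrow> (real \<times> real \<Rightarrow> real) \<Rightarrow> real" where
  "l2sq l1 l2 u = integral (rect l1 l2) (\<lambda>x. (u x)\<^sup>2)"

text \<open>k-th Robin eigenvalue (counted with multiplicity) via the Courant--Fischer min-max
  principle for the Robin form, the k-dimensional trial spaces being spanned by k functions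
  of the core that are linearly independent on the rectangle.\<close>
definition robin_eig :: "real \<Rightarrow> real \<Rightarrow> real \<Rightarrow> nat \<Rightarrow> real" where
  "robin_eig l1 l2 \<alpha> k =
     Inf { Sup { robin_form l1 l2 \<alpha> (\<lambda>x. \<Sum>i<k. c i * f i x)
                   / l2sq l1 l2 (\<lambda>x. \<Sum>i<k. c i * f i x)
               | c. \<exists>x\<in>rect l1 l2. (\<Sum>i<k. c i * f i x) \<noteq> 0 }
         | f. (\<forall>i<k. C1_fun (f i)) \<and>
              (\<forall>c. (\<forall>x\<in>rect l1 l2. (\<Sum>i<k. c i * f i x) = 0) \<longrightarrow> (\<forall>i<k. c i = 0)) }"

end

theory Submission
  imports Defs
begin

lemma dirichlet_1d:
  fixes G F :: "real \<Rightarrow> real"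
  assumes ab: "a < b" and k: "0 < k" "k*(b-a) < pi"
  and der: "\<And>x. x \<in> {a..b} \<Longrightarrow> (G has_real_derivative F x) (at x within {a..b})"
  and cF: "continuous_on {a..b} F"
  and Ga: "G a = 0" and Gb: "G b = 0"
  shows "k^2 * integral {a..b} (\<lambda>x. (G x)^2) \<le> integral {a..b} (\<lambda>x. (F x)^2)"
proof -
  define m where "m = (a+b)/2"
  define phi where "phi x = - k * tan (k*(x-m))" for x
  define dphi where "dphi x = - k * (inverse ((cos (k*(x-m)))^2) * k)" for x
  have cpos: "cos (k*(x-m)) > 0" if "x \<in> {a..b}" for x
  proof (rule cos_gt_zero_pi)
    have "\<bar>k*(x-m)\<bar> \<le> k*(b-a)/2" using that k unfolding m_def
      by (auto simp: abs_if field_simps)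
    then show "- (pi / 2) < k * (x - m)" "k * (x - m) < pi / 2" using k by auto
  qed
  have phid: "(phi has_real_derivative dphi x) (at x within {a..b})" if "x \<in> {a..b}" for x
  proof -
    have "((\<lambda>x. tan (k*(x-m))) has_real_derivative inverse ((cos (k*(x-m)))^2) * k) (at x)"
      using DERIV_tan[of "k*(x-m)"] cpos[OF that]
      by (auto intro!: derivative_eq_intros DERIV_chain2[where f=tan])
    then have "((\<lambda>x. - k * tan (k*(x-m))) has_real_derivative - k * (inverse ((cos (k*(x-m)))^2) * k)) (at x)"
      by (rule DERIV_cmult)
    then show ?thesis unfolding phi_def dphi_def
      by (rule has_field_derivative_at_within)
  qed
  have key: "dphi x + (phi x)^2 = -(k^2)" if "x \<in> {a..b}" for x
  proof -
    have c: "cos (k*(x-m)) \<noteq> 0" using cpos[OF that] by simp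
    define C where "C = cos (k*(x-m))"
    define S where "S = sin (k*(x-m))"
    have sc: "S^2 = 1 - C^2" unfolding S_def C_def by (simp add: sin_squared_eq)
    have "dphi x + (phi x)^2 = -(k^2) / C^2 + k^2 * S^2 / C^2"
      unfolding phi_def dphi_def tan_def C_def[symmetric] S_def[symmetric]
      by (simp add: divide_simps power2_eq_square)
    also have "\<dots> = k^2 * (S^2 - 1) / C^2" by (simp add: diff_divide_distrib right_diff_distrib)
    also have "\<dots> = k^2 * (- (C^2)) / C^2" unfolding sc by simp
    also have "\<dots> = -(k^2)" using c unfolding C_def[symmetric] by simp
    finally show ?thesis .
  qed
  have cG: "continuous_on {a..b} G"
    using der by (meson DERIV_continuous continuous_on_eq_continuous_within)
  have cphi: "continuous_on {a..b} phi"
    using phid by (meson DERIV_continuous continuous_on_eq_continuous_within)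
  define h where "h x = phi x * (G x)^2" for x
  define h' where "h' x = dphi x * (G x)^2 + phi x * (2 * G x * F x)" for x
  have hd: "(h has_vector_derivative h' x) (at x within {a..b})" if "x \<in> {a..b}" for x
    unfolding has_real_derivative_iff_has_vector_derivative[symmetric] h_def h'_def
    using phid[OF that] der[OF that]
    by (auto intro!: derivative_eq_intros simp: algebra_simps)
  have "(h' has_integral (h b - h a)) {a..b}"
    using fundamental_theorem_of_calculus[of a b h h'] hd ab by auto
  then have h0: "(h' has_integral 0) {a..b}" using Ga Gb unfolding h_def by simp
  have iF: "((\<lambda>x. (F x)^2) has_integral integral {a..b} (\<lambda>x. (F x)^2)) {a..b}"
    by (intro integrable_integral integrable_continuous_interval continuous_intros cF)
  have iG: "((\<lambda>x. (G x)^2) has_integral integral {a..b} (\<lambda>x. (G x)^2)) {a..b}"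
    by (intro integrable_integral integrable_continuous_interval continuous_intros cG)
  have "((\<lambda>x. (F x)^2 - h' x - k^2 * (G x)^2) has_integral
        (integral {a..b} (\<lambda>x. (F x)^2) - 0 - k^2 * integral {a..b} (\<lambda>x. (G x)^2))) {a..b}"
    by (intro has_integral_diff has_integral_mult_right iF iG h0)
  then have "((\<lambda>x. (F x - phi x * G x)^2) has_integral
        (integral {a..b} (\<lambda>x. (F x)^2) - 0 - k^2 * integral {a..b} (\<lambda>x. (G x)^2))) {a..b}"
  proof (rule has_integral_eq[rotated])
    fix x assume "x \<in> {a..b}"
    then have E: "dphi x = -(k^2) - (phi x)^2" using key by force
    show "(F x)^2 - h' x - k^2 * (G x)^2 = (F x - phi x * G x)^2"
      unfolding h'_def E by (simp add: algebra_simps power2_eq_square)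
  qed
  then have "0 \<le> integral {a..b} (\<lambda>x. (F x)^2) - 0 - k^2 * integral {a..b} (\<lambda>x. (G x)^2)"
    by (rule has_integral_nonneg) auto
  then show ?thesis by simp
qed

lemma neumann_1d:
  fixes g g' :: "real \<Rightarrow> real"
  assumes ab: "a < b" and k: "0 < k" "k*(b-a) < pi"
  and der: "\<And>x. x \<in> {a..b} \<Longrightarrow> (g has_real_derivative g' x) (at x within {a..b})"
  and cg': "continuous_on {a..b} g'"
  shows "k^2 * (integral {a..b} (\<lambda>x. (g x)^2) - (integral {a..b} g)^2 / (b-a))
           \<le> integral {a..b} (\<lambda>x. (g' x)^2)"
proof -
  have cg: "continuous_on {a..b} g"
    using der by (meson DERIV_continuous continuous_on_eq_continuous_within)
  define c where "c = integral {a..b} g / (b-a)"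
  define f where "f x = g x - c" for x
  define G where "G x = integral {a..x} f" for x
  have cf: "continuous_on {a..b} f" unfolding f_def by (intro continuous_intros cg)
  have Gd: "(G has_real_derivative f x) (at x within {a..b})" if "x \<in> {a..b}" for x
    unfolding has_real_derivative_iff_has_vector_derivative G_def
    by (rule integral_has_vector_derivative[OF cf that])
  have cG: "continuous_on {a..b} G"
    using Gd by (meson DERIV_continuous continuous_on_eq_continuous_within)
  have Ga: "G a = 0" unfolding G_def by simp
  have intg: "(g has_integral integral {a..b} g) {a..b}"
    by (intro integrable_integral integrable_continuous_interval cg)
  have "(f has_integral (integral {a..b} g - c * (b-a))) {a..b}"
    unfolding f_def using has_integral_diff[OF intg has_integral_const_real[of c a b]] ab by (simp add: mult.commute)
  then have "integral {a..b} f = 0" unfolding c_def using ab by (simp add: integral_unique)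
  then have Gb: "G b = 0" unfolding G_def .
  have dir: "k^2 * integral {a..b} (\<lambda>x. (G x)^2) \<le> integral {a..b} (\<lambda>x. (f x)^2)"
    by (rule dirichlet_1d[OF ab k Gd cf Ga Gb])
  have "((\<lambda>x. f x * f x + G x * g' x) has_integral (G b * f b - G a * f a)) {a..b}"
  proof (rule fundamental_theorem_of_calculus)
    show "a \<le> b" using ab by simp
    fix x assume x: "x \<in> {a..b}"
    have "(f has_real_derivative g' x) (at x within {a..b})"
      unfolding f_def using der[OF x] by (auto intro!: derivative_eq_intros)
    then show "((\<lambda>x. G x * f x) has_vector_derivative f x * f x + G x * g' x) (at x within {a..b})"
      unfolding has_real_derivative_iff_has_vector_derivative[symmetric]
      using Gd[OF x] by (auto intro!: derivative_eq_intros simp: algebra_simps)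
  qed
  then have ibp0: "((\<lambda>x. f x * f x + G x * g' x) has_integral 0) {a..b}" using Ga Gb by simp
  have if2: "((\<lambda>x. (f x)^2) has_integral integral {a..b} (\<lambda>x. (f x)^2)) {a..b}"
    by (intro integrable_integral integrable_continuous_interval continuous_intros cf)
  have iG2: "((\<lambda>x. (G x)^2) has_integral integral {a..b} (\<lambda>x. (G x)^2)) {a..b}"
    by (intro integrable_integral integrable_continuous_interval continuous_intros cG)
  have igp2: "((\<lambda>x. (g' x)^2) has_integral integral {a..b} (\<lambda>x. (g' x)^2)) {a..b}"
    by (intro integrable_integral integrable_continuous_interval continuous_intros cg')
  have "((\<lambda>x. (f x * f x + G x * g' x) - (f x)^2) has_integral 0 - integral {a..b} (\<lambda>x. (f x)^2)) {a..b}"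
    by (rule has_integral_diff[OF ibp0 if2])
  then have iGg: "((\<lambda>x. G x * g' x) has_integral - integral {a..b} (\<lambda>x. (f x)^2)) {a..b}"
    by (simp add: power2_eq_square)
  have "((\<lambda>x. (k^2 * (G x)^2 + (g' x)^2 / k^2) / 2 + G x * g' x) has_integral
      (k^2 * integral {a..b} (\<lambda>x. (G x)^2) + integral {a..b} (\<lambda>x. (g' x)^2) / k^2) / 2
       + - integral {a..b} (\<lambda>x. (f x)^2)) {a..b}"
    by (intro has_integral_add has_integral_divide has_integral_mult_right iG2 igp2 iGg)
  then have "0 \<le> (k^2 * integral {a..b} (\<lambda>x. (G x)^2) + integral {a..b} (\<lambda>x. (g' x)^2) / k^2) / 2
       + - integral {a..b} (\<lambda>x. (f x)^2)"
  proof (rule has_integral_nonneg)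
    fix x
    have eq: "(k^2 * (G x)^2 + (g' x)^2 / k^2) / 2 + G x * g' x = (k * G x + g' x / k)^2 / 2"
      using k by (simp add: power2_eq_square field_simps)
    show "0 \<le> (k^2 * (G x)^2 + (g' x)^2 / k^2) / 2 + G x * g' x" unfolding eq by simp
  qed
  with dir have f2: "integral {a..b} (\<lambda>x. (f x)^2) \<le> integral {a..b} (\<lambda>x. (g' x)^2) / k^2"
    by simp
  have "k^2 * integral {a..b} (\<lambda>x. (f x)^2) \<le> k^2 * (integral {a..b} (\<lambda>x. (g' x)^2) / k^2)"
    by (rule mult_left_mono[OF f2]) simp
  also have "\<dots> = integral {a..b} (\<lambda>x. (g' x)^2)" using k by simp
  finally have main: "k^2 * integral {a..b} (\<lambda>x. (f x)^2) \<le> integral {a..b} (\<lambda>x. (g' x)^2)" .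
  have ig2: "((\<lambda>x. (g x)^2) has_integral integral {a..b} (\<lambda>x. (g x)^2)) {a..b}"
    by (intro integrable_integral integrable_continuous_interval continuous_intros cg)
  have "((\<lambda>x. (g x)^2 - (2*c) * g x + c^2) has_integral
     integral {a..b} (\<lambda>x. (g x)^2) - (2*c) * integral {a..b} g + (b-a) * c^2) {a..b}"
    using has_integral_add[OF has_integral_diff[OF ig2 has_integral_mult_right[OF intg, where c="2*c"]]
          has_integral_const_real[of "c^2" a b]] ab by simp
  then have "((\<lambda>x. (f x)^2) has_integral
     integral {a..b} (\<lambda>x. (g x)^2) - (2*c) * integral {a..b} g + (b-a) * c^2) {a..b}"
    unfolding f_def by (simp add: power2_eq_square algebra_simps)
  then have "integral {a..b} (\<lambda>x. (f x)^2) = integral {a..b} (\<lambda>x. (g x)^2) - (2*c) * integral {a..b} g + (b-a) * c^2"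
    by (rule integral_unique)
  also have "\<dots> = integral {a..b} (\<lambda>x. (g x)^2) - (integral {a..b} g)^2 / (b-a)"
  proof -
    have aux: "\<And>X J d::real. d \<noteq> 0 \<Longrightarrow> X - (2*(J/d))*J + d*(J/d)^2 = X - J^2/d"
      by (simp add: field_simps power2_eq_square)
    show ?thesis unfolding c_def by (rule aux) (use ab in simp)
  qed
  finally show ?thesis using main by simp
qed

lemma cs_1d:
  fixes g :: "real \<Rightarrow> real"
  assumes ab: "a < b" and cg: "continuous_on {a..b} g"
  shows "(integral {a..b} g)^2 \<le> (b-a) * integral {a..b} (\<lambda>x. (g x)^2)"
proof -
  define c where "c = integral {a..b} g / (b-a)"
  have intg: "(g has_integral integral {a..b} g) {a..b}"
    by (intro integrable_integral integrable_continuous_interval cg)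
  have ig2: "((\<lambda>x. (g x)^2) has_integral integral {a..b} (\<lambda>x. (g x)^2)) {a..b}"
    by (intro integrable_integral integrable_continuous_interval continuous_intros cg)
  have "((\<lambda>x. (g x)^2 - (2*c) * g x + c^2) has_integral
     integral {a..b} (\<lambda>x. (g x)^2) - (2*c) * integral {a..b} g + (b-a) * c^2) {a..b}"
    using has_integral_add[OF has_integral_diff[OF ig2 has_integral_mult_right[OF intg, where c="2*c"]]
          has_integral_const_real[of "c^2" a b]] ab by simp
  then have "((\<lambda>x. (g x - c)^2) has_integral
     integral {a..b} (\<lambda>x. (g x)^2) - (2*c) * integral {a..b} g + (b-a) * c^2) {a..b}"
    by (simp add: power2_eq_square algebra_simps)
  then have "0 \<le> integral {a..b} (\<lambda>x. (g x)^2) - (2*c) * integral {a..b} g + (b-a) * c^2"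
    by (rule has_integral_nonneg) simp
  also have "\<dots> = integral {a..b} (\<lambda>x. (g x)^2) - (integral {a..b} g)^2 / (b-a)"
  proof -
    have aux: "\<And>X J d::real. d \<noteq> 0 \<Longrightarrow> X - (2*(J/d))*J + d*(J/d)^2 = X - J^2/d"
      by (simp add: field_simps power2_eq_square)
    show ?thesis unfolding c_def by (rule aux) (use ab in simp)
  qed
  finally show ?thesis using ab by (simp add: field_simps)
qed

lemma fub:
  fixes F :: "real \<times> real \<Rightarrow> real"
  assumes "continuous_on UNIV F"
  shows "integral (cbox (x0,y0) (x1,y1)) F = integral {y0..y1} (\<lambda>y. integral {x0..x1} (\<lambda>x. F (x,y)))"
proof -
  have c: "continuous_on (cbox (x0,y0) (x1,y1)) F" using assms by (rule continuous_on_subset) simp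
  have c2: "continuous_on (cbox (x0,y0) (x1,y1)) (\<lambda>(x,y). F (x,y))" using c by simp
  have "integral (cbox (x0,y0) (x1,y1)) F = integral (cbox x0 x1) (\<lambda>x. integral (cbox y0 y1) (\<lambda>y. F (x, y)))"
    by (rule integral_prod_continuous[OF c])
  also have "\<dots> = integral (cbox y0 y1) (\<lambda>y. integral (cbox x0 x1) (\<lambda>x. F (x, y)))"
    using integral_swap_continuous[where f="\<lambda>x y. F (x,y)", OF c2] by simp
  finally show ?thesis by (simp add: cbox_interval)
qed

lemma pcont:
  fixes F :: "real \<times> real \<Rightarrow> real"
  assumes "continuous_on UNIV F"
  shows "continuous_on S (\<lambda>y. integral {x0..x1} (\<lambda>x. F (x,y)))"
proof -
  have "continuous_on UNIV (\<lambda>p. F (snd p, fst p))"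
    by (rule continuous_on_compose2[OF assms]) (auto intro!: continuous_intros)
  then have "continuous_on (S \<times> cbox x0 x1) (\<lambda>p. F (snd p, fst p))"
    by (rule continuous_on_subset) simp
  then have "continuous_on (S \<times> cbox x0 x1) (\<lambda>(y, x). F (x,y))"
    by (simp add: case_prod_unfold)
  from integral_continuous_on_param[OF this] show ?thesis by (simp add: cbox_interval)
qed

lemma pderiv_x:
  assumes "(u has_derivative (\<lambda>h. gx (x,y) * fst h + gy (x,y) * snd h)) (at (x,y))"
  shows "((\<lambda>t. u (t,y)) has_real_derivative gx (x,y)) (at x within S)"
proof -
  have "((\<lambda>t. (t,y)) has_derivative (\<lambda>t. (t,0))) (at x within S)"
    by (auto intro!: derivative_eq_intros)
  from has_derivative_compose[OF this assms[unfolded]] have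
    "((\<lambda>t. u (t,y)) has_derivative (\<lambda>t. gx (x,y) * t)) (at x within S)" by simp
  then show ?thesis by (simp add: has_field_derivative_def)
qed

lemma pderiv_y:
  assumes "(u has_derivative (\<lambda>h. gx (x,y) * fst h + gy (x,y) * snd h)) (at (x,y))"
  shows "((\<lambda>t. u (x,t)) has_real_derivative gy (x,y)) (at y within S)"
proof -
  have "((\<lambda>t. (x,t)) has_derivative (\<lambda>t. (0,t))) (at y within S)"
    by (auto intro!: derivative_eq_intros)
  from has_derivative_compose[OF this assms[unfolded]] have
    "((\<lambda>t. u (x,t)) has_derivative (\<lambda>t. gy (x,y) * t)) (at y within S)" by simp
  then show ?thesis by (simp add: has_field_derivative_def)
qed

lemma cell:
  fixes u gx gy :: "real \<times> real \<Rightarrow> real"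
  assumes D: "\<And>z. (u has_derivative (\<lambda>h. gx z * fst h + gy z * snd h)) (at z)"
  and cx: "continuous_on UNIV gx" and cy: "continuous_on UNIV gy"
  and xs: "x0 < x1" and ys: "y0 < y1" and k: "0 < k" "k*(x1-x0) < pi" "k*(y1-y0) < pi"
  and z: "integral (cbox (x0,y0) (x1,y1)) u = 0"
  shows "k^2 * integral (cbox (x0,y0) (x1,y1)) (\<lambda>z. (u z)^2)
           \<le> integral (cbox (x0,y0) (x1,y1)) (\<lambda>z. (gx z)^2 + (gy z)^2)"
proof -
  have cu: "continuous_on UNIV u"
    by (rule has_derivative_continuous_on[of UNIV u "\<lambda>z h. gx z * fst h + gy z * snd h"]) (use D in simp)
  define w where "w = x1 - x0"
  have w: "w > 0" using xs unfolding w_def by simp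
  define m where "m y = integral {x0..x1} (\<lambda>x. u (x,y))" for y
  define m' where "m' y = integral {x0..x1} (\<lambda>x. gy (x,y))" for y
  define P where "P y = integral {x0..x1} (\<lambda>x. (u (x,y))^2)" for y
  define Q where "Q y = integral {x0..x1} (\<lambda>x. (gx (x,y))^2)" for y
  define R where "R y = integral {x0..x1} (\<lambda>x. (gy (x,y))^2)" for y
  have cm: "continuous_on S m" for S unfolding m_def by (rule pcont[OF cu])
  have cm': "continuous_on S m'" for S unfolding m'_def by (rule pcont[OF cy])
  have cP: "continuous_on S P" for S unfolding P_def
    by (rule pcont[where F="\<lambda>z. (u z)^2", simplified]) (intro continuous_intros cu)
  have cQ: "continuous_on S Q" for S unfolding Q_def
    by (rule pcont[where F="\<lambda>z. (gx z)^2", simplified]) (intro continuous_intros cx)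
  have cR: "continuous_on S R" for S unfolding R_def
    by (rule pcont[where F="\<lambda>z. (gy z)^2", simplified]) (intro continuous_intros cy)
  have step1: "k^2 * P y \<le> k^2 * (m y)^2 / w + Q y" for y
  proof -
    have "k^2 * (P y - (m y)^2 / w) \<le> Q y"
      unfolding P_def m_def Q_def w_def
    proof (rule neumann_1d[OF xs k(1) k(2)])
      fix x assume "x \<in> {x0..x1}"
      show "((\<lambda>x. u (x, y)) has_real_derivative gx (x, y)) (at x within {x0..x1})"
        by (rule pderiv_x[where u=u and gx=gx and gy=gy and x=x and y=y, OF D[of "(x,y)"]])
    next
      show "continuous_on {x0..x1} (\<lambda>x. gx (x, y))"
        by (rule continuous_on_compose2[OF cx]) (auto intro!: continuous_intros)
    qed
    then show ?thesis by (simp add: algebra_simps)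
  qed
  have mder: "(m has_real_derivative m' y) (at y within {y0..y1})" if "y \<in> {y0..y1}" for y
  proof -
    have c2: "continuous_on ({y0..y1} \<times> cbox x0 x1) (\<lambda>(y, t). gy (t, y))"
    proof -
      have "continuous_on UNIV (\<lambda>p. gy (snd p, fst p))"
        by (rule continuous_on_compose2[OF cy]) (auto intro!: continuous_intros)
      then have "continuous_on ({y0..y1} \<times> cbox x0 x1) (\<lambda>p. gy (snd p, fst p))"
        by (rule continuous_on_subset) simp
      then show ?thesis by (simp add: case_prod_unfold)
    qed
    have "((\<lambda>y. integral (cbox x0 x1) (\<lambda>t. u (t, y))) has_field_derivative
           integral (cbox x0 x1) (\<lambda>t. gy (t, y))) (at y within {y0..y1})"
    proof (rule leibniz_rule_field_derivative[where f="\<lambda>y t. u (t,y)" and fx="\<lambda>y t. gy (t,y)"])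
      fix y t assume "y \<in> {y0..y1}" "t \<in> cbox x0 x1"
      show "((\<lambda>y. u (t, y)) has_field_derivative gy (t, y)) (at y within {y0..y1})"
        by (rule pderiv_y[where u=u and gx=gx and gy=gy and x=t and y=y, OF D[of "(t,y)"]])
    next
      fix y
      show "(\<lambda>t. u (t, y)) integrable_on cbox x0 x1"
        by (rule integrable_continuous, rule continuous_on_compose2[OF cu]) (auto intro!: continuous_intros)
    next
      show "continuous_on ({y0..y1} \<times> cbox x0 x1) (\<lambda>(y, t). gy (t, y))" by (rule c2)
    qed (use that in auto)
    then show ?thesis unfolding m_def m'_def by (simp add: cbox_interval)
  qed
  have intm: "integral {y0..y1} m = 0"
    using z fub[OF cu, of x0 y0 x1 y1] unfolding m_def by simp
  have step3: "k^2 * (integral {y0..y1} (\<lambda>y. (m y)^2) - (integral {y0..y1} m)^2 / (y1-y0))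
           \<le> integral {y0..y1} (\<lambda>y. (m' y)^2)"
    by (rule neumann_1d[OF ys k(1) k(3) mder cm'])
  then have step3': "k^2 * integral {y0..y1} (\<lambda>y. (m y)^2) \<le> integral {y0..y1} (\<lambda>y. (m' y)^2)"
    using intm by simp
  have step4: "(m' y)^2 \<le> w * R y" for y
    unfolding m'_def R_def w_def
    by (rule cs_1d[OF xs], rule continuous_on_compose2[OF cy]) (auto intro!: continuous_intros)
  have ii: "f integrable_on {y0..y1}" if "continuous_on UNIV f" for f :: "real \<Rightarrow> real"
    by (rule integrable_continuous_interval, rule continuous_on_subset[OF that]) simp
  have "integral {y0..y1} (\<lambda>y. (m' y)^2) \<le> integral {y0..y1} (\<lambda>y. w * R y)"
    by (rule integral_le[OF ii ii]) (auto intro!: continuous_intros cm' cR step4)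
  then have s4: "integral {y0..y1} (\<lambda>y. (m' y)^2) \<le> w * integral {y0..y1} R" by simp
  have "integral {y0..y1} (\<lambda>y. k^2 * P y) \<le> integral {y0..y1} (\<lambda>y. k^2 * (m y)^2 / w + Q y)"
    by (rule integral_le[OF ii ii]) (use w in \<open>auto intro!: continuous_intros cm cP cQ step1\<close>)
  also have "\<dots> = integral {y0..y1} (\<lambda>y. k^2 / w * (m y)^2) + integral {y0..y1} Q"
    by (subst integral_add[symmetric]) (use w in \<open>auto intro!: ii continuous_intros cm cQ\<close>)
  finally have s5: "k^2 * integral {y0..y1} P \<le> k^2 / w * integral {y0..y1} (\<lambda>y. (m y)^2) + integral {y0..y1} Q"
    by simp
  have "k^2 / w * integral {y0..y1} (\<lambda>y. (m y)^2) \<le> (1/w) * integral {y0..y1} (\<lambda>y. (m' y)^2)"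
    using step3' w by (simp add: divide_right_mono)
  also have "\<dots> \<le> (1/w) * (w * integral {y0..y1} R)"
    using s4 w by (intro mult_left_mono) auto
  also have "\<dots> = integral {y0..y1} R" using w by simp
  finally have s6: "k^2 * integral {y0..y1} P \<le> integral {y0..y1} Q + integral {y0..y1} R"
    using s5 by linarith
  have e1: "integral (cbox (x0,y0) (x1,y1)) (\<lambda>z. (u z)^2) = integral {y0..y1} P"
    unfolding P_def by (rule fub) (intro continuous_intros cu)
  have "integral (cbox (x0,y0) (x1,y1)) (\<lambda>z. (gx z)^2 + (gy z)^2) =
        integral {y0..y1} (\<lambda>y. integral {x0..x1} (\<lambda>x. (gx (x,y))^2 + (gy (x,y))^2))"
    by (rule fub) (intro continuous_intros cx cy)
  also have "\<dots> = integral {y0..y1} (\<lambda>y. Q y + R y)"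
  proof (rule integral_cong)
    fix y
    have i1: "(\<lambda>x. (gx (x,y))^2) integrable_on {x0..x1}"
      by (rule integrable_continuous_interval) (auto intro!: continuous_intros continuous_on_compose2[OF cx])
    have i2: "(\<lambda>x. (gy (x,y))^2) integrable_on {x0..x1}"
      by (rule integrable_continuous_interval) (auto intro!: continuous_intros continuous_on_compose2[OF cy])
    show "integral {x0..x1} (\<lambda>x. (gx (x,y))^2 + (gy (x,y))^2) = Q y + R y"
      unfolding Q_def R_def by (rule integral_add[OF i1 i2])
  qed
  also have "\<dots> = integral {y0..y1} Q + integral {y0..y1} R"
    by (rule integral_add) (auto intro!: ii cQ cR)
  finally show ?thesis using e1 s6 by simp
qed

lemma split1d:
  fixes F :: "real \<Rightarrow> real"
  assumes d: "d > 0" and cF: "continuous_on UNIV F"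
  shows "integral {a..a + real p * d} F = (\<Sum>i<p. integral {a + real i * d..a + real (Suc i) * d} F)"
proof (induction p)
  case 0
  then show ?case by simp
next
  case (Suc p)
  have "integral {a..a + real p * d} F + integral {a + real p * d..a + real (Suc p) * d} F
        = integral {a..a + real (Suc p) * d} F"
    by (rule Henstock_Kurzweil_Integration.integral_combine) (use d in \<open>auto intro!: integrable_continuous_interval continuous_on_subset[OF cF]\<close>)
  then show ?case using Suc by simp
qed

lemma grid:
  fixes F :: "real \<times> real \<Rightarrow> real"
  assumes w: "w > 0" and h: "h > 0" and cF: "continuous_on UNIV F"
  shows "integral (cbox (0,0) (real p * w, real q * h)) F =
         (\<Sum>i<p. \<Sum>j<q. integral (cbox (real i * w, real j * h) (real (Suc i) * w, real (Suc j) * h)) F)"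
proof -
  have pc: "continuous_on UNIV (\<lambda>y. integral {a..b} (\<lambda>x. F (x,y)))" for a b
    by (rule pcont[OF cF])
  have "integral (cbox (0,0) (real p * w, real q * h)) F =
        integral {0..real q * h} (\<lambda>y. integral {0..real p * w} (\<lambda>x. F (x,y)))"
    by (rule fub[OF cF])
  also have "\<dots> = integral {0..real q * h} (\<lambda>y. \<Sum>i<p. integral {real i * w..real (Suc i) * w} (\<lambda>x. F (x,y)))"
  proof (rule integral_cong)
    fix y
    have "continuous_on UNIV (\<lambda>x. F (x,y))"
      by (rule continuous_on_compose2[OF cF]) (auto intro!: continuous_intros)
    from split1d[OF w this, of 0 p] show "integral {0..real p * w} (\<lambda>x. F (x,y)) =
       (\<Sum>i<p. integral {real i * w..real (Suc i) * w} (\<lambda>x. F (x,y)))" by simp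
  qed
  also have "\<dots> = (\<Sum>i<p. integral {0..real q * h} (\<lambda>y. integral {real i * w..real (Suc i) * w} (\<lambda>x. F (x,y))))"
    by (rule integral_sum) (auto intro!: integrable_continuous_interval continuous_on_subset[OF pc])
  also have "\<dots> = (\<Sum>i<p. \<Sum>j<q. integral {real j * h..real (Suc j) * h} (\<lambda>y. integral {real i * w..real (Suc i) * w} (\<lambda>x. F (x,y))))"
  proof (rule sum.cong[OF refl])
    fix i
    from split1d[OF h pc, of 0 q] show "integral {0..real q * h} (\<lambda>y. integral {real i * w..real (Suc i) * w} (\<lambda>x. F (x,y))) =
      (\<Sum>j<q. integral {real j * h..real (Suc j) * h} (\<lambda>y. integral {real i * w..real (Suc i) * w} (\<lambda>x. F (x,y))))"
      by simp
  qed
  also have "\<dots> = (\<Sum>i<p. \<Sum>j<q. integral (cbox (real i * w, real j * h) (real (Suc i) * w, real (Suc j) * h)) F)"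
    by (intro sum.cong refl fub[OF cF, symmetric])
  finally show ?thesis .
qed

lemma grid_poincare:
  fixes u gx gy :: "real \<times> real \<Rightarrow> real"
  assumes D: "\<And>z. (u has_derivative (\<lambda>h. gx z * fst h + gy z * snd h)) (at z)"
  and cx: "continuous_on UNIV gx" and cy: "continuous_on UNIV gy"
  and w: "w > 0" and h: "h > 0" and k: "0 < k" "k*w < pi" "k*h < pi"
  and z: "\<And>i j. i < p \<Longrightarrow> j < q \<Longrightarrow>
           integral (cbox (real i * w, real j * h) (real (Suc i) * w, real (Suc j) * h)) u = 0"
  shows "k^2 * integral (cbox (0,0) (real p * w, real q * h)) (\<lambda>z. (u z)^2)
           \<le> integral (cbox (0,0) (real p * w, real q * h)) (\<lambda>z. (gx z)^2 + (gy z)^2)"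
proof -
  have cu: "continuous_on UNIV u"
    by (rule has_derivative_continuous_on[of UNIV u "\<lambda>z h. gx z * fst h + gy z * snd h"]) (use D in simp)
  have "k^2 * integral (cbox (0,0) (real p * w, real q * h)) (\<lambda>z. (u z)^2) =
    (\<Sum>i<p. \<Sum>j<q. k^2 * integral (cbox (real i * w, real j * h) (real (Suc i) * w, real (Suc j) * h)) (\<lambda>z. (u z)^2))"
    by (subst grid[OF w h]) (auto intro!: continuous_intros cu simp: sum_distrib_left)
  also have "\<dots> \<le> (\<Sum>i<p. \<Sum>j<q. integral (cbox (real i * w, real j * h) (real (Suc i) * w, real (Suc j) * h)) (\<lambda>z. (gx z)^2 + (gy z)^2))"
  proof (intro sum_mono)
    fix i j assume "i \<in> {..<p}" "j \<in> {..<q}"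
    then show "k^2 * integral (cbox (real i * w, real j * h) (real (Suc i) * w, real (Suc j) * h)) (\<lambda>z. (u z)^2)
      \<le> integral (cbox (real i * w, real j * h) (real (Suc i) * w, real (Suc j) * h)) (\<lambda>z. (gx z)^2 + (gy z)^2)"
      by (intro cell[OF D cx cy] z) (use w h k in \<open>auto simp: algebra_simps\<close>)
  qed
  also have "\<dots> = integral (cbox (0,0) (real p * w, real q * h)) (\<lambda>z. (gx z)^2 + (gy z)^2)"
    by (subst grid[OF w h]) (auto intro!: continuous_intros cx cy)
  finally show ?thesis .
qed

lemma linsys_nontrivial:
  fixes a :: "'e \<Rightarrow> 'i \<Rightarrow> real"
  assumes "finite E" "finite S" "card E < card S"
  shows "\<exists>c. (\<exists>i\<in>S. c i \<noteq> 0) \<and> (\<forall>e\<in>E. (\<Sum>i\<in>S. a e i * c i) = 0)"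
  using assms
proof (induction E arbitrary: S a rule: finite_induct)
  case empty
  then obtain i where "i \<in> S" by (metis card.empty card_gt_0_iff ex_in_conv)
  then show ?case by (intro exI[of _ "\<lambda>_. 1"]) auto
next
  case (insert e E S a)
  have cE: "card E < card S" using insert by simp
  show ?case
  proof (cases "\<forall>i\<in>S. a e i = 0")
    case True
    from insert.IH[OF insert.prems(1) cE, of a] obtain c where
      "\<exists>i\<in>S. c i \<noteq> 0" "\<forall>e\<in>E. (\<Sum>i\<in>S. a e i * c i) = 0" by blast
    then show ?thesis using True by (intro exI[of _ c]) auto
  next
    case False
    then obtain i0 where i0: "i0 \<in> S" "a e i0 \<noteq> 0" by blast
    define S' where "S' = S - {i0}"
    have fS': "finite S'" using insert.prems(1) unfolding S'_def by simp
    have cS': "card E < card S'" unfolding S'_def using insert i0 by (simp add: card_Diff_singleton)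
    define a' where "a' e' i = a e' i - a e' i0 * a e i / a e i0" for e' i
    from insert.IH[OF fS' cS', of a'] obtain c' where
      c'1: "\<exists>i\<in>S'. c' i \<noteq> 0" and c'2: "\<forall>e'\<in>E. (\<Sum>i\<in>S'. a' e' i * c' i) = 0" by blast
    define c where "c i = (if i = i0 then - (\<Sum>j\<in>S'. a e j * c' j) / a e i0 else c' i)" for i
    have split: "(\<Sum>i\<in>S. b i * c i) = b i0 * c i0 + (\<Sum>i\<in>S'. b i * c' i)" for b
    proof -
      have "(\<Sum>i\<in>S. b i * c i) = b i0 * c i0 + (\<Sum>i\<in>S'. b i * c i)"
        unfolding S'_def using i0 insert.prems(1) by (simp add: sum.remove)
      also have "(\<Sum>i\<in>S'. b i * c i) = (\<Sum>i\<in>S'. b i * c' i)"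
        by (rule sum.cong) (auto simp: c_def S'_def)
      finally show ?thesis .
    qed
    have "\<forall>e'\<in>insert e E. (\<Sum>i\<in>S. a e' i * c i) = 0"
    proof
      fix e' assume "e' \<in> insert e E"
      then consider "e' = e" | "e' \<in> E" by blast
      then show "(\<Sum>i\<in>S. a e' i * c i) = 0"
      proof cases
        case 1
        then show ?thesis unfolding split using i0 by (simp add: c_def)
      next
        case 2
        have "0 = (\<Sum>i\<in>S'. a' e' i * c' i)" using c'2 2 by simp
        also have "\<dots> = (\<Sum>i\<in>S'. a e' i * c' i) - a e' i0 / a e i0 * (\<Sum>i\<in>S'. a e i * c' i)"
          unfolding a'_def by (simp add: sum_subtractf sum_distrib_left algebra_simps)
        finally have "(\<Sum>i\<in>S'. a e' i * c' i) = a e' i0 / a e i0 * (\<Sum>i\<in>S'. a e i * c' i)" by simp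
        then show ?thesis unfolding split using i0 by (simp add: c_def field_simps)
      qed
    qed
    moreover have "\<exists>i\<in>S. c i \<noteq> 0"
      using c'1 unfolding S'_def c_def by auto
    ultimately show ?thesis by blast
  qed
qed

lemma rect_cbox: "rect l1 l2 = cbox (0,0) (l1,l2)"
proof -
  have "cbox (0::real) l1 = {0..l1}" "cbox (0::real) l2 = {0..l2}" by (simp_all add: cbox_interval)
  then show ?thesis unfolding rect_def cbox_Pair_eq by simp
qed

lemma C1_choice:
  assumes "\<forall>i<n. C1_fun (f i)"
  obtains GX GY where "\<And>i. i < n \<Longrightarrow> continuous_on UNIV (GX i)"
    "\<And>i. i < n \<Longrightarrow> continuous_on UNIV (GY i)"
    "\<And>i x. i < n \<Longrightarrow> (f i has_derivative (\<lambda>h. GX i x * fst h + GY i x * snd h)) (at x)"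
proof -
  from assms have "\<forall>i. \<exists>gx. \<exists>gy. i < n \<longrightarrow> (continuous_on UNIV gx \<and> continuous_on UNIV gy \<and>
     (\<forall>x. (f i has_derivative (\<lambda>h. gx x * fst h + gy x * snd h)) (at x)))"
    unfolding C1_fun_def by blast
  then have "\<exists>GX. \<forall>i. \<exists>gy. i < n \<longrightarrow> (continuous_on UNIV (GX i) \<and> continuous_on UNIV gy \<and>
     (\<forall>x. (f i has_derivative (\<lambda>h. GX i x * fst h + gy x * snd h)) (at x)))"
    by (rule choice)
  then obtain GX where "\<forall>i. \<exists>gy. i < n \<longrightarrow> (continuous_on UNIV (GX i) \<and> continuous_on UNIV gy \<and>
     (\<forall>x. (f i has_derivative (\<lambda>h. GX i x * fst h + gy x * snd h)) (at x)))" by blast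
  then have "\<exists>GY. \<forall>i. i < n \<longrightarrow> (continuous_on UNIV (GX i) \<and> continuous_on UNIV (GY i) \<and>
     (\<forall>x. (f i has_derivative (\<lambda>h. GX i x * fst h + GY i x * snd h)) (at x)))"
    by (rule choice)
  then obtain GY where "\<forall>i. i < n \<longrightarrow> (continuous_on UNIV (GX i) \<and> continuous_on UNIV (GY i) \<and>
     (\<forall>x. (f i has_derivative (\<lambda>h. GX i x * fst h + GY i x * snd h)) (at x)))" by blast
  then show ?thesis using that[of GX GY] by blast
qed

lemma comb_deriv:
  fixes f GX GY :: "nat \<Rightarrow> real \<times> real \<Rightarrow> real"
  assumes "\<And>i x. i < n \<Longrightarrow> (f i has_derivative (\<lambda>h. GX i x * fst h + GY i x * snd h)) (at x)"
  shows "((\<lambda>x. \<Sum>i<n. c i * f i x) has_derivative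
          (\<lambda>h. (\<Sum>i<n. c i * GX i x) * fst h + (\<Sum>i<n. c i * GY i x) * snd h)) (at x)"
proof -
  have "((\<lambda>x. \<Sum>i<n. c i * f i x) has_derivative
          (\<lambda>h. \<Sum>i<n. c i * (GX i x * fst h + GY i x * snd h))) (at x)"
  proof (rule has_derivative_sum)
    fix i assume "i \<in> {..<n}"
    then have i: "i < n" by simp
    show "((\<lambda>x. c i * f i x) has_derivative (\<lambda>h. c i * (GX i x * fst h + GY i x * snd h))) (at x)"
      by (rule has_derivative_mult_right[OF assms[OF i]])
  qed
  moreover have "(\<lambda>h. \<Sum>i<n. c i * (GX i x * fst h + GY i x * snd h)) =
     (\<lambda>h. (\<Sum>i<n. c i * GX i x) * fst h + (\<Sum>i<n. c i * GY i x) * snd h)"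
    by (simp add: distrib_left sum.distrib sum_distrib_right mult.assoc)
  ultimately show ?thesis by simp
qed

lemma grad_sq_eq:
  fixes u :: "real \<times> real \<Rightarrow> real"
  assumes "(u has_derivative (\<lambda>h. gx * fst h + gy * snd h)) (at x)"
  shows "grad_sq u x = gx^2 + gy^2"
proof -
  have "frechet_derivative u (at x) = (\<lambda>h. gx * fst h + gy * snd h)"
    using frechet_derivative_at[OF assms] by simp
  then show ?thesis unfolding grad_sq_def by simp
qed

lemma pos_l2:
  fixes u :: "real \<times> real \<Rightarrow> real"
  assumes cu: "continuous_on UNIV u" and L: "L1 > 0" "L2 > 0"
  and x: "x \<in> cbox (0,0) (L1,L2)" and ux: "u x \<noteq> 0"
  shows "integral (cbox (0,0) (L1,L2)) (\<lambda>z. (u z)^2) > 0"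
proof -
  have c2: "continuous_on (cbox (0,0) (L1,L2)) (\<lambda>z. (u z)^2)"
    by (intro continuous_intros continuous_on_subset[OF cu]) auto
  have i: "(\<lambda>z. (u z)^2) integrable_on cbox (0,0) (L1,L2)" by (rule integrable_continuous[OF c2])
  have ge: "integral (cbox (0,0) (L1,L2)) (\<lambda>z. (u z)^2) \<ge> 0"
    by (rule integral_nonneg[OF i]) simp
  have "integral (cbox (0,0) (L1,L2)) (\<lambda>z. (u z)^2) \<noteq> 0"
  proof
    assume "integral (cbox (0,0) (L1,L2)) (\<lambda>z. (u z)^2) = 0"
    then have "((\<lambda>z. (u z)^2) has_integral 0) (cbox (0,0) (L1,L2))"
      using integrable_integral[OF i] by simp
    from has_integral_0_cbox_imp_0[OF c2 _ this _ x] have "(u x)^2 = 0"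
      using L by (auto simp: box_ne_empty inner_Pair_0 Basis_prod_def)
    with ux show False by simp
  qed
  with ge show ?thesis by simp
qed

lemma monomials_adm:
  assumes L1: "L1 > 0" and L2: "L2 \<ge> 0"
  shows "(\<forall>i<n. C1_fun (\<lambda>z. (fst z)^i)) \<and>
     (\<forall>c. (\<forall>x\<in>rect L1 L2. (\<Sum>i<n. c i * (fst x)^i) = 0) \<longrightarrow> (\<forall>i<n. c i = 0))"
proof safe
  fix i
  show "C1_fun (\<lambda>z. (fst z)^i)"
    unfolding C1_fun_def
  proof (intro exI conjI allI)
    show "continuous_on UNIV (\<lambda>z. real i * (fst z)^(i-1))" by (intro continuous_intros)
    show "continuous_on UNIV (\<lambda>z::real\<times>real. 0::real)" by simp
    fix x :: "real \<times> real"
    have "((\<lambda>z. (fst z)^i) has_derivative (\<lambda>h. real i * (fst x)^(i-1) * fst h)) (at x)"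
      by (auto intro!: derivative_eq_intros simp: algebra_simps)
    then show "((\<lambda>z. (fst z)^i) has_derivative (\<lambda>h. real i * (fst x)^(i-1) * fst h + 0 * snd h)) (at x)"
      by simp
  qed
next
  fix c :: "nat \<Rightarrow> real" and i
  assume H: "\<forall>x\<in>rect L1 L2. (\<Sum>i<n. c i * (fst x)^i) = 0" and i: "i < n"
  define c' where "c' j = (if j < n then c j else 0)" for j
  have eq: "(\<Sum>j\<le>n. c' j * t^j) = (\<Sum>j<n. c j * t^j)" for t :: real
  proof -
    have "(\<Sum>j\<le>n. c' j * t^j) = (\<Sum>j<Suc n. c' j * t^j)" by (simp add: lessThan_Suc_atMost)
    also have "\<dots> = (\<Sum>j<n. c' j * t^j)" by (simp add: c'_def)
    also have "\<dots> = (\<Sum>j<n. c j * t^j)" by (simp add: c'_def)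
    finally show ?thesis .
  qed
  have "{0..L1} \<subseteq> {t. (\<Sum>j\<le>n. c' j * t^j) = 0}"
  proof
    fix t assume "t \<in> {0..L1}"
    then have "(t,0) \<in> rect L1 L2" using L2 by (simp add: rect_def)
    with H show "t \<in> {t. (\<Sum>j\<le>n. c' j * t^j) = 0}" unfolding eq by force
  qed
  moreover have "infinite {0..L1}" using L1 by simp
  ultimately have "infinite {t. (\<Sum>j\<le>n. c' j * t^j) = 0}" using finite_subset by blast
  then have "\<not> (\<exists>k. k \<le> n \<and> c' k \<noteq> 0)" using polyfun_finite_roots by blast
  then have "c' i = 0" using i by auto
  then show "c i = 0" using i by (simp add: c'_def)
qed

lemma int_cs:
  fixes U V :: "real \<times> real \<Rightarrow> real"
  assumes cU: "continuous_on UNIV U" and cV: "continuous_on UNIV V"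
  shows "(integral (cbox a b) (\<lambda>z. U z * V z))^2
          \<le> integral (cbox a b) (\<lambda>z. (U z)^2) * integral (cbox a b) (\<lambda>z. (V z)^2)"
proof -
  define A where "A = integral (cbox a b) (\<lambda>z. (U z)^2)"
  define B where "B = integral (cbox a b) (\<lambda>z. U z * V z)"
  define C where "C = integral (cbox a b) (\<lambda>z. (V z)^2)"
  have iA: "((\<lambda>z. (U z)^2) has_integral A) (cbox a b)" unfolding A_def
    by (intro integrable_integral integrable_continuous continuous_intros continuous_on_subset[OF cU]) auto
  have iB: "((\<lambda>z. U z * V z) has_integral B) (cbox a b)" unfolding B_def
    by (intro integrable_integral integrable_continuous continuous_intros continuous_on_subset[OF cU]
        continuous_on_subset[OF cV]) auto
  have iC: "((\<lambda>z. (V z)^2) has_integral C) (cbox a b)" unfolding C_def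
    by (intro integrable_integral integrable_continuous continuous_intros continuous_on_subset[OF cV]) auto
  have quad: "0 \<le> A - 2 * t * B + t^2 * C" for t
  proof -
    have "((\<lambda>z. (U z)^2 - (2 * t) * (U z * V z) + t^2 * (V z)^2) has_integral A - (2*t) * B + t^2 * C) (cbox a b)"
      by (intro has_integral_add has_integral_diff has_integral_mult_right iA iB iC)
    then have "((\<lambda>z. (U z - t * V z)^2) has_integral A - (2*t) * B + t^2 * C) (cbox a b)"
      by (rule has_integral_eq[rotated]) (simp add: power2_eq_square algebra_simps)
    then show ?thesis by (rule has_integral_nonneg) simp
  qed
  have C0: "C \<ge> 0" by (rule has_integral_nonneg[OF iC]) simp
  have "B^2 \<le> A * C"
  proof (cases "C = 0")
    case True
    have "B = 0"
    proof (rule ccontr)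
      assume "B \<noteq> 0"
      have "0 \<le> A - 2 * ((A+1)/(2*B)) * B + ((A+1)/(2*B))^2 * C" by (rule quad)
      also have "\<dots> = -1" using \<open>B \<noteq> 0\<close> True by (simp add: field_simps)
      finally show False by simp
    qed
    then show ?thesis using True by simp
  next
    case False
    then have Cp: "C > 0" using C0 by simp
    have "0 \<le> A - 2 * (B/C) * B + (B/C)^2 * C" by (rule quad)
    also have "\<dots> = (A * C - B^2) / C" using Cp by (simp add: field_simps power2_eq_square)
    finally have "0 \<le> (A * C - B^2) / C" .
    then have "0 \<le> A * C - B^2" using Cp by (simp add: divide_nonneg_pos zero_le_divide_iff)
    then show ?thesis by simp
  qed
  then show ?thesis unfolding A_def B_def C_def .
qed

lemma bil_exp:
  fixes f :: "nat \<Rightarrow> real \<times> real \<Rightarrow> real"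
  assumes cf: "\<And>i. i < n \<Longrightarrow> continuous_on UNIV (f i)"
  shows "integral (cbox a b) (\<lambda>z. (\<Sum>i<n. c i * f i z) * (\<Sum>j<n. d j * f j z))
       = (\<Sum>i<n. \<Sum>j<n. c i * d j * integral (cbox a b) (\<lambda>z. f i z * f j z))"
proof -
  have int: "(\<lambda>z. f i z * f j z) integrable_on cbox a b" if "i < n" "j < n" for i j
    by (intro integrable_continuous continuous_intros continuous_on_subset[OF cf[OF that(1)]]
        continuous_on_subset[OF cf[OF that(2)]]) auto
  have "integral (cbox a b) (\<lambda>z. (\<Sum>i<n. c i * f i z) * (\<Sum>j<n. d j * f j z))
      = integral (cbox a b) (\<lambda>z. \<Sum>i<n. \<Sum>j<n. c i * d j * (f i z * f j z))"
    by (rule integral_cong) (simp add: sum_product algebra_simps)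
  also have "\<dots> = (\<Sum>i<n. integral (cbox a b) (\<lambda>z. \<Sum>j<n. c i * d j * (f i z * f j z)))"
    by (rule integral_sum) (auto intro!: integrable_sum integrable_on_mult_right int)
  also have "\<dots> = (\<Sum>i<n. \<Sum>j<n. integral (cbox a b) (\<lambda>z. c i * d j * (f i z * f j z)))"
    by (intro sum.cong refl integral_sum) (auto intro!: integrable_on_mult_right int)
  also have "\<dots> = (\<Sum>i<n. \<Sum>j<n. c i * d j * integral (cbox a b) (\<lambda>z. f i z * f j z))"
    by simp
  finally show ?thesis .
qed

lemma cc1: "continuous_on UNIV g \<Longrightarrow> continuous_on S (\<lambda>t::real. g (t, y::real))"
  by (rule continuous_on_compose2[of UNIV g]) (auto intro!: continuous_intros)
lemma cc2: "continuous_on UNIV g \<Longrightarrow> continuous_on S (\<lambda>t::real. g (y::real, t))"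
  by (rule continuous_on_compose2[of UNIV g]) (auto intro!: continuous_intros)

lemma bdd_T:
  fixes f :: "nat \<Rightarrow> real \<times> real \<Rightarrow> real"
  assumes L: "L1 > 0" "L2 > 0" and al: "\<alpha> \<ge> 0"
  and C1: "\<forall>i<n. C1_fun (f i)"
  and ind: "\<forall>c. (\<forall>x\<in>rect L1 L2. (\<Sum>i<n. c i * f i x) = 0) \<longrightarrow> (\<forall>i<n. c i = 0)"
  shows "bdd_above {robin_form L1 L2 \<alpha> (\<lambda>x. \<Sum>i<n. c i * f i x) / l2sq L1 L2 (\<lambda>x. \<Sum>i<n. c i * f i x)
            | c. \<exists>x\<in>rect L1 L2. (\<Sum>i<n. c i * f i x) \<noteq> 0}"
proof -
  obtain GX GY where cGX: "\<And>i. i < n \<Longrightarrow> continuous_on UNIV (GX i)"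
    and cGY: "\<And>i. i < n \<Longrightarrow> continuous_on UNIV (GY i)"
    and D: "\<And>i x. i < n \<Longrightarrow> (f i has_derivative (\<lambda>h. GX i x * fst h + GY i x * snd h)) (at x)"
    using C1_choice[OF C1] by blast
  define S where "S = cbox (0::real,0::real) (L1,L2)"
  have rS: "rect L1 L2 = S" unfolding S_def by (rule rect_cbox)
  have cf: "continuous_on UNIV (f i)" if "i < n" for i
    by (rule has_derivative_continuous_on[of UNIV "f i" "\<lambda>x h. GX i x * fst h + GY i x * snd h"])
       (use D[OF that] in simp)
  define u where "u c = (\<lambda>z. \<Sum>i<n. c i * f i z)" for c :: "nat \<Rightarrow> real"
  have cu: "continuous_on UNIV (u c)" for c
    unfolding u_def by (intro continuous_on_sum continuous_on_mult_left cf) simp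
  define Gm where "Gm i j = integral S (\<lambda>z. f i z * f j z)" for i j
  define Dq where "Dq c = integral S (\<lambda>z. (u c z)^2)" for c
  have Bexp: "integral S (\<lambda>z. u c z * u d z) = (\<Sum>i<n. \<Sum>j<n. c i * d j * Gm i j)" for c d
    unfolding u_def Gm_def S_def by (rule bil_exp[OF cf])
  have Dexp: "Dq c = (\<Sum>i<n. c i * (\<Sum>j<n. Gm i j * c j))" for c
  proof -
    have "Dq c = integral S (\<lambda>z. u c z * u c z)" unfolding Dq_def by (simp add: power2_eq_square)
    also have "\<dots> = (\<Sum>i<n. \<Sum>j<n. c i * c j * Gm i j)" by (rule Bexp)
    also have "\<dots> = (\<Sum>i<n. c i * (\<Sum>j<n. Gm i j * c j))"
      by (simp add: sum_distrib_left algebra_simps)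
    finally show ?thesis .
  qed
  have pos: "Dq c > 0" if "\<exists>x\<in>S. u c x \<noteq> 0" for c
    using that pos_l2[OF cu L] unfolding Dq_def S_def by blast
  have inj: "\<forall>j<n. d j = 0" if "\<forall>i<n. (\<Sum>j<n. Gm i j * d j) = 0" for d
  proof -
    have "Dq d = 0" unfolding Dexp using that by simp
    then have "\<not> (\<exists>x\<in>S. u d x \<noteq> 0)"
    proof (intro notI)
      assume "\<exists>x\<in>S. u d x \<noteq> 0"
      then have "Dq d > 0" by (rule pos)
      with \<open>Dq d = 0\<close> show False by simp
    qed
    then have "\<forall>x\<in>rect L1 L2. (\<Sum>i<n. d i * f i x) = 0" unfolding rS u_def by blast
    then show ?thesis using ind by blast
  qed
  have dual: "\<exists>d. \<forall>i<n. (\<Sum>j<n. Gm i j * d j) = (if i = l then 1 else 0)" for l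
  proof -
    define a where "a i j = (if j < n then Gm i j else - (if i = l then 1 else 0))" for i j
    have "\<exists>c. (\<exists>j\<in>{..<Suc n}. c j \<noteq> 0) \<and> (\<forall>i\<in>{..<n}. (\<Sum>j\<in>{..<Suc n}. a i j * c j) = 0)"
      by (rule linsys_nontrivial) simp_all
    then obtain c where c1: "\<exists>j\<in>{..<Suc n}. c j \<noteq> 0"
      and c2: "\<forall>i\<in>{..<n}. (\<Sum>j\<in>{..<Suc n}. a i j * c j) = 0" by blast
    have c3: "(\<Sum>j<n. Gm i j * c j) = (if i = l then 1 else 0) * c n" if "i < n" for i
    proof -
      have e: "(\<Sum>j<Suc n. a i j * c j) = 0" using c2 that by blast
      have e1: "(\<Sum>j<Suc n. a i j * c j) = (\<Sum>j<n. a i j * c j) + a i n * c n" by (rule sum.lessThan_Suc)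
      have e2: "(\<Sum>j<n. a i j * c j) = (\<Sum>j<n. Gm i j * c j)" by (rule sum.cong) (auto simp: a_def)
      have e3: "a i n * c n = - ((if i = l then 1 else 0) * c n)" by (simp add: a_def)
      show ?thesis using e e1 e2 e3 by linarith
    qed
    have cn: "c n \<noteq> 0"
    proof
      assume c0: "c n = 0"
      then have "\<forall>i<n. (\<Sum>j<n. Gm i j * c j) = 0" using c3 by simp
      then have z: "\<forall>j<n. c j = 0" by (rule inj)
      from c1 obtain j where j: "j < Suc n" "c j \<noteq> 0" by blast
      show False
      proof (cases "j = n")
        case True then show False using j c0 by simp
      next
        case False then have "j < n" using j by simp
        then show False using z j by simp
      qed
    qed
    show ?thesis
    proof (intro exI[of _ "\<lambda>j. c j / c n"] allI impI)
      fix i assume i: "i < n"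
      have "(\<Sum>j<n. Gm i j * (c j / c n)) = (\<Sum>j<n. Gm i j * c j) / c n"
        by (simp add: sum_divide_distrib)
      also have "\<dots> = (if i = l then 1 else 0)" using c3[OF i] cn by simp
      finally show "(\<Sum>j<n. Gm i j * (c j / c n)) = (if i = l then 1 else 0)" .
    qed
  qed
  have "\<forall>l. \<exists>d. \<forall>i<n. (\<Sum>j<n. Gm i j * d j) = (if i = l then 1 else 0)"
    using dual by blast
  then have "\<exists>DL. \<forall>l. \<forall>i<n. (\<Sum>j<n. Gm i j * DL l j) = (if i = l then 1 else 0)"
    by (rule choice)
  then obtain DL where DL: "\<And>l i. i < n \<Longrightarrow> (\<Sum>j<n. Gm i j * DL l j) = (if i = l then 1 else 0)"
    by blast
  have coord: "c l = integral S (\<lambda>z. u c z * u (DL l) z)" if "l < n" for c l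
  proof -
    have "integral S (\<lambda>z. u c z * u (DL l) z) = (\<Sum>i<n. \<Sum>j<n. c i * DL l j * Gm i j)" by (rule Bexp)
    also have "\<dots> = (\<Sum>i<n. c i * (\<Sum>j<n. Gm i j * DL l j))"
      by (simp add: sum_distrib_left algebra_simps)
    also have "\<dots> = (\<Sum>i<n. c i * (if i = l then 1 else 0))"
      by (rule sum.cong) (auto simp: DL)
    also have "\<dots> = c l" using that by (simp add: if_distrib cong: if_cong)
    finally show ?thesis by simp
  qed
  define H where "H = (\<Sum>l<n. Dq (DL l))"
  have Vb: "(\<Sum>l<n. (c l)^2) \<le> Dq c * H" for c
  proof -
    have "(c l)^2 \<le> Dq c * Dq (DL l)" if "l < n" for l
      unfolding coord[OF that] Dq_def S_def by (rule int_cs[OF cu cu])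
    then have "(\<Sum>l<n. (c l)^2) \<le> (\<Sum>l<n. Dq c * Dq (DL l))" by (intro sum_mono) auto
    then show ?thesis unfolding H_def by (simp add: sum_distrib_left)
  qed
  define K1 where "K1 = integral S (\<lambda>z. \<Sum>i<n. (GX i z)^2 + (GY i z)^2)"
  define K2 where "K2 = integral {0..L1} (\<lambda>t. \<Sum>i<n. (f i (t,0))^2 + (f i (t,L2))^2)"
  define K3 where "K3 = integral {0..L2} (\<lambda>t. \<Sum>i<n. (f i (0,t))^2 + (f i (L1,t))^2)"
  define K where "K = K1 + \<alpha> * (K2 + K3)"
  have Nb: "robin_form L1 L2 \<alpha> (u c) \<le> (\<Sum>l<n. (c l)^2) * K" for c
  proof -
    define V where "V = (\<Sum>l<n. (c l)^2)"
    have gs: "grad_sq (u c) z = (\<Sum>i<n. c i * GX i z)^2 + (\<Sum>i<n. c i * GY i z)^2" for z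
      unfolding u_def by (rule grad_sq_eq, rule comb_deriv, rule D)
    have cs: "(\<Sum>i<n. c i * b i)^2 \<le> V * (\<Sum>i<n. (b i)^2)" for b
      unfolding V_def by (rule Cauchy_Schwarz_ineq_sum)
    have "integral S (grad_sq (u c)) = integral S (\<lambda>z. (\<Sum>i<n. c i * GX i z)^2 + (\<Sum>i<n. c i * GY i z)^2)"
      by (rule integral_cong) (rule gs)
    also have "\<dots> \<le> integral S (\<lambda>z. V * (\<Sum>i<n. (GX i z)^2 + (GY i z)^2))"
    proof (rule integral_le)
      show "(\<lambda>z. (\<Sum>i<n. c i * GX i z)^2 + (\<Sum>i<n. c i * GY i z)^2) integrable_on S"
        unfolding S_def by (rule integrable_continuous, rule continuous_on_subset[OF _ subset_UNIV],
            intro continuous_intros cGX cGY) auto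
      show "(\<lambda>z. V * (\<Sum>i<n. (GX i z)^2 + (GY i z)^2)) integrable_on S"
        unfolding S_def by (rule integrable_continuous, rule continuous_on_subset[OF _ subset_UNIV],
            intro continuous_intros cGX cGY) auto
      fix z
      have "(\<Sum>i<n. c i * GX i z)^2 + (\<Sum>i<n. c i * GY i z)^2
          \<le> V * (\<Sum>i<n. (GX i z)^2) + V * (\<Sum>i<n. (GY i z)^2)"
        using cs[of "\<lambda>i. GX i z"] cs[of "\<lambda>i. GY i z"] by linarith
      then show "(\<Sum>i<n. c i * GX i z)^2 + (\<Sum>i<n. c i * GY i z)^2
          \<le> V * (\<Sum>i<n. (GX i z)^2 + (GY i z)^2)"
        by (simp add: sum.distrib distrib_left)
    qed
    also have "\<dots> = V * K1" unfolding K1_def by simp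
    finally have g: "integral (rect L1 L2) (grad_sq (u c)) \<le> V * K1" unfolding rS .
    have b1: "integral {0..L1} (\<lambda>t. (u c (t,0))^2 + (u c (t,L2))^2) \<le> V * K2"
    proof -
      have "integral {0..L1} (\<lambda>t. (u c (t,0))^2 + (u c (t,L2))^2)
          \<le> integral {0..L1} (\<lambda>t. V * (\<Sum>i<n. (f i (t,0))^2 + (f i (t,L2))^2))"
      proof (rule integral_le)
        show "(\<lambda>t. (u c (t,0))^2 + (u c (t,L2))^2) integrable_on {0..L1}"
          by (intro integrable_continuous_interval continuous_intros cc1 cu)
        show "(\<lambda>t. V * (\<Sum>i<n. (f i (t,0))^2 + (f i (t,L2))^2)) integrable_on {0..L1}"
          by (intro integrable_continuous_interval continuous_intros cc1 cf) auto
        fix t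
        have "(u c (t,0))^2 + (u c (t,L2))^2 \<le> V * (\<Sum>i<n. (f i (t,0))^2) + V * (\<Sum>i<n. (f i (t,L2))^2)"
          using cs[of "\<lambda>i. f i (t,0)"] cs[of "\<lambda>i. f i (t,L2)"] unfolding u_def by linarith
        then show "(u c (t,0))^2 + (u c (t,L2))^2 \<le> V * (\<Sum>i<n. (f i (t,0))^2 + (f i (t,L2))^2)"
          by (simp add: sum.distrib distrib_left)
      qed
      also have "\<dots> = V * K2" unfolding K2_def by simp
      finally show ?thesis .
    qed
    have b2: "integral {0..L2} (\<lambda>t. (u c (0,t))^2 + (u c (L1,t))^2) \<le> V * K3"
    proof -
      have "integral {0..L2} (\<lambda>t. (u c (0,t))^2 + (u c (L1,t))^2)
          \<le> integral {0..L2} (\<lambda>t. V * (\<Sum>i<n. (f i (0,t))^2 + (f i (L1,t))^2))"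
      proof (rule integral_le)
        show "(\<lambda>t. (u c (0,t))^2 + (u c (L1,t))^2) integrable_on {0..L2}"
          by (intro integrable_continuous_interval continuous_intros cc2 cu)
        show "(\<lambda>t. V * (\<Sum>i<n. (f i (0,t))^2 + (f i (L1,t))^2)) integrable_on {0..L2}"
          by (intro integrable_continuous_interval continuous_intros cc2 cf) auto
        fix t
        have "(u c (0,t))^2 + (u c (L1,t))^2 \<le> V * (\<Sum>i<n. (f i (0,t))^2) + V * (\<Sum>i<n. (f i (L1,t))^2)"
          using cs[of "\<lambda>i. f i (0,t)"] cs[of "\<lambda>i. f i (L1,t)"] unfolding u_def by linarith
        then show "(u c (0,t))^2 + (u c (L1,t))^2 \<le> V * (\<Sum>i<n. (f i (0,t))^2 + (f i (L1,t))^2)"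
          by (simp add: sum.distrib distrib_left)
      qed
      also have "\<dots> = V * K3" unfolding K3_def by simp
      finally show ?thesis .
    qed
    have "\<alpha> * (integral {0..L1} (\<lambda>t. (u c (t,0))^2 + (u c (t,L2))^2)
            + integral {0..L2} (\<lambda>t. (u c (0,t))^2 + (u c (L1,t))^2)) \<le> \<alpha> * (V * K2 + V * K3)"
      using b1 b2 al by (intro mult_left_mono) auto
    with g show ?thesis unfolding robin_form_def K_def V_def by (simp add: algebra_simps)
  qed
  show ?thesis
  proof (rule bdd_aboveI[where M="H * \<bar>K\<bar>"], clarify)
    fix c x assume x: "x \<in> rect L1 L2" "(\<Sum>i<n. c i * f i x) \<noteq> 0"
    have Dp: "Dq c > 0" using x unfolding rS by (intro pos bexI[of _ x]) (auto simp: u_def)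
    have l2: "l2sq L1 L2 (\<lambda>x. \<Sum>i<n. c i * f i x) = Dq c"
      unfolding l2sq_def Dq_def rS u_def ..
    have "robin_form L1 L2 \<alpha> (u c) \<le> (\<Sum>l<n. (c l)^2) * K" by (rule Nb)
    also have "\<dots> \<le> (\<Sum>l<n. (c l)^2) * \<bar>K\<bar>" by (intro mult_left_mono) (auto intro: sum_nonneg)
    also have "\<dots> \<le> (Dq c * H) * \<bar>K\<bar>" by (intro mult_right_mono Vb) auto
    finally have "robin_form L1 L2 \<alpha> (u c) \<le> Dq c * (H * \<bar>K\<bar>)" by (simp add: algebra_simps)
    then show "robin_form L1 L2 \<alpha> (\<lambda>x. \<Sum>i<n. c i * f i x) / l2sq L1 L2 (\<lambda>x. \<Sum>i<n. c i * f i x) \<le> H * \<bar>K\<bar>"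
      unfolding l2 using Dp by (simp add: u_def divide_le_eq mult.commute)
  qed
qed

lemma eig_lower:
  fixes w h k \<alpha> :: real and p q n :: nat
  assumes w: "w > 0" and h: "h > 0" and pq: "p > 0" "q > 0"
  and k: "0 < k" "k*w < pi" "k*h < pi" and al: "\<alpha> \<ge> 0" and n: "p*q < n"
  shows "k^2 \<le> robin_eig (real p * w) (real q * h) \<alpha> n"
proof -
  define L1 where "L1 = real p * w"
  define L2 where "L2 = real q * h"
  have L: "L1 > 0" "L2 > 0" unfolding L1_def L2_def using w h pq by auto
  define S where "S = cbox (0::real,0::real) (L1,L2)"
  have rS: "rect L1 L2 = S" unfolding S_def by (rule rect_cbox)
  let ?adm = "\<lambda>f. (\<forall>i<n. C1_fun (f i)) \<and>
              (\<forall>c. (\<forall>x\<in>rect L1 L2. (\<Sum>i<n. c i * f i x) = 0) \<longrightarrow> (\<forall>i<n. c i = 0))"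
  let ?T = "\<lambda>f. {robin_form L1 L2 \<alpha> (\<lambda>x. \<Sum>i<n. c i * f i x) / l2sq L1 L2 (\<lambda>x. \<Sum>i<n. c i * f i x)
                   | c. \<exists>x\<in>rect L1 L2. (\<Sum>i<n. c i * f i x) \<noteq> 0}"
  have main: "k^2 \<le> Sup (?T f)" if adm: "?adm f" for f :: "nat \<Rightarrow> real \<times> real \<Rightarrow> real"
  proof -
    have C1: "\<forall>i<n. C1_fun (f i)" and ind: "\<forall>c. (\<forall>x\<in>rect L1 L2. (\<Sum>i<n. c i * f i x) = 0) \<longrightarrow> (\<forall>i<n. c i = 0)"
      using adm by auto
    obtain GX GY where cGX: "\<And>i. i < n \<Longrightarrow> continuous_on UNIV (GX i)"
      and cGY: "\<And>i. i < n \<Longrightarrow> continuous_on UNIV (GY i)"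
      and D: "\<And>i x. i < n \<Longrightarrow> (f i has_derivative (\<lambda>h. GX i x * fst h + GY i x * snd h)) (at x)"
      using C1_choice[OF C1] by blast
    have cf: "continuous_on UNIV (f i)" if "i < n" for i
      by (rule has_derivative_continuous_on[of UNIV "f i" "\<lambda>x h. GX i x * fst h + GY i x * snd h"])
         (use D[OF that] in simp)
    define cell where "cell i j = cbox (real i * w, real j * h) (real (Suc i) * w, real (Suc j) * h)" for i j
    define a where "a e l = integral (cell (fst e) (snd e)) (f l)" for e l
    have "\<exists>c. (\<exists>l\<in>{..<n}. c l \<noteq> 0) \<and> (\<forall>e\<in>{..<p}\<times>{..<q}. (\<Sum>l\<in>{..<n}. a e l * c l) = 0)"
      by (rule linsys_nontrivial) (use n in \<open>simp_all add: card_cartesian_product\<close>)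
    then obtain c where c1: "\<exists>l\<in>{..<n}. c l \<noteq> 0"
      and c2: "\<forall>e\<in>{..<p}\<times>{..<q}. (\<Sum>l\<in>{..<n}. a e l * c l) = 0" by blast
    define u where "u = (\<lambda>z. \<Sum>i<n. c i * f i z)"
    have cu: "continuous_on UNIV u"
      unfolding u_def by (intro continuous_on_sum continuous_on_mult_left cf) simp
    have cellz: "integral (cell i j) u = 0" if "i < p" "j < q" for i j
    proof -
      have "integral (cell i j) u = (\<Sum>l<n. integral (cell i j) (\<lambda>z. c l * f l z))"
        unfolding u_def cell_def
        by (rule integral_sum) (auto intro!: integrable_continuous continuous_intros
            continuous_on_subset[OF cf])
      also have "\<dots> = (\<Sum>l<n. a (i,j) l * c l)" by (simp add: a_def mult.commute)
      also have "\<dots> = 0" using c2 that by simp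
      finally show ?thesis .
    qed
    have nz: "\<exists>x\<in>rect L1 L2. u x \<noteq> 0"
    proof (rule ccontr)
      assume "\<not> (\<exists>x\<in>rect L1 L2. u x \<noteq> 0)"
      then have "\<forall>x\<in>rect L1 L2. (\<Sum>i<n. c i * f i x) = 0" unfolding u_def by blast
      then have "\<forall>i<n. c i = 0" using ind by blast
      with c1 show False by auto
    qed
    define gx where "gx z = (\<Sum>i<n. c i * GX i z)" for z
    define gy where "gy z = (\<Sum>i<n. c i * GY i z)" for z
    have Du: "(u has_derivative (\<lambda>h. gx z * fst h + gy z * snd h)) (at z)" for z
      unfolding u_def gx_def gy_def by (rule comb_deriv, rule D)
    have cgx: "continuous_on UNIV gx"
      unfolding gx_def by (intro continuous_on_sum continuous_on_mult_left cGX) simp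
    have cgy: "continuous_on UNIV gy"
      unfolding gy_def by (intro continuous_on_sum continuous_on_mult_left cGY) simp
    have gp: "k^2 * integral S (\<lambda>z. (u z)^2) \<le> integral S (\<lambda>z. (gx z)^2 + (gy z)^2)"
      unfolding S_def L1_def L2_def
      by (rule grid_poincare[OF Du cgx cgy w h k]) (use cellz in \<open>simp add: cell_def\<close>)
    also have "\<dots> = integral S (grad_sq u)"
      by (rule integral_cong) (rule grad_sq_eq[OF Du, symmetric])
    also have "\<dots> \<le> robin_form L1 L2 \<alpha> u"
    proof -
      have "0 \<le> integral {0..L1} (\<lambda>t. (u (t,0))^2 + (u (t,L2))^2)"
        by (rule integral_nonneg) (auto intro!: integrable_continuous_interval continuous_intros cc1 cu)
      moreover have "0 \<le> integral {0..L2} (\<lambda>t. (u (0,t))^2 + (u (L1,t))^2)"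
        by (rule integral_nonneg) (auto intro!: integrable_continuous_interval continuous_intros cc2 cu)
      ultimately show ?thesis unfolding robin_form_def rS using al by simp
    qed
    finally have ineq: "k^2 * l2sq L1 L2 u \<le> robin_form L1 L2 \<alpha> u" unfolding l2sq_def rS .
    have Dp: "l2sq L1 L2 u > 0"
      using nz pos_l2[OF cu L] unfolding l2sq_def rS S_def by blast
    have le: "k^2 \<le> robin_form L1 L2 \<alpha> u / l2sq L1 L2 u"
      using ineq Dp by (simp add: le_divide_eq)
    have mem: "robin_form L1 L2 \<alpha> u / l2sq L1 L2 u \<in> ?T f"
      using nz unfolding u_def by blast
    show ?thesis
      by (rule cSup_upper2[OF mem le bdd_T[OF L al C1 ind]])
  qed
  have ne: "{Sup (?T f) | f. ?adm f} \<noteq> {}"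
  proof -
    have m: "?adm (\<lambda>i z. (fst z)^i)"
      using monomials_adm[OF L(1) less_imp_le[OF L(2)], where n=n] by simp
    have "Sup (?T (\<lambda>i z. (fst z)^i)) \<in> {Sup (?T f) | f. ?adm f}"
      unfolding mem_Collect_eq by (rule exI[of _ "\<lambda>i z. (fst z)^i"]) (use m in simp)
    then show ?thesis by (metis empty_iff)

  qed
  have "k^2 \<le> Inf {Sup (?T f) | f. ?adm f}"
    by (rule cInf_greatest[OF ne]) (use main in blast)
  then show ?thesis unfolding robin_eig_def L1_def L2_def .
qed

theorem lemma6p3:
  fixes \<alpha> A a lam :: real
  assumes "\<alpha> > 0" and "A > 0" and "a \<ge> 1" and "lam > 0"
  shows "finite {k::nat. k \<ge> 1 \<and> robin_eig (sqrt A * a) (sqrt A / a) \<alpha> k \<le> lam} \<and>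
         real (card {k::nat. k \<ge> 1 \<and> robin_eig (sqrt A * a) (sqrt A / a) \<alpha> k \<le> lam})
           \<le> lam * A / pi\<^sup>2 + sqrt (lam * A) / pi * (a + 1 / a) + 1"
proof -
  note al = assms(1) and Ap = assms(2) and a1 = assms(3) and lp = assms(4)
  have ap: "a > 0" using a1 by simp
  define L1 where "L1 = sqrt A * a"
  define L2 where "L2 = sqrt A / a"
  have L1p: "L1 > 0" unfolding L1_def using Ap ap by simp
  have L2p: "L2 > 0" unfolding L2_def using Ap ap by simp
  define s where "s = sqrt lam"
  have sp: "s > 0" unfolding s_def using lp by simp
  define X where "X = L1 * s / pi"
  define Y where "Y = L2 * s / pi"
  have X0: "X \<ge> 0" "Y \<ge> 0" unfolding X_def Y_def using L1p L2p sp by auto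
  define p where "p = nat \<lfloor>X\<rfloor> + 1"
  define q where "q = nat \<lfloor>Y\<rfloor> + 1"
  have rp: "real p = of_int \<lfloor>X\<rfloor> + 1" unfolding p_def using X0 by simp
  have rq: "real q = of_int \<lfloor>Y\<rfloor> + 1" unfolding q_def using X0 by simp
  have pX: "X < real p" "real p \<le> X + 1" unfolding rp by linarith+
  have qY: "Y < real q" "real q \<le> Y + 1" unfolding rq by linarith+
  have pq: "p > 0" "q > 0" unfolding p_def q_def by auto
  define w where "w = L1 / real p"
  define h where "h = L2 / real q"
  have wp: "w > 0" "h > 0" unfolding w_def h_def using L1p L2p pq by auto
  have Lw: "real p * w = L1" "real q * h = L2" unfolding w_def h_def using pq by auto
  have sw: "s * w < pi"
  proof -
    have "L1 * s / pi < real p" using pX(1) unfolding X_def .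
    then have "L1 * s < real p * pi" by (simp add: divide_less_eq)
    then have "L1 * s / real p < pi" using pq by (simp add: divide_less_eq mult.commute)
    then show ?thesis unfolding w_def by (simp add: mult.commute)
  qed
  have sh: "s * h < pi"
  proof -
    have "L2 * s / pi < real q" using qY(1) unfolding Y_def .
    then have "L2 * s < real q * pi" by (simp add: divide_less_eq)
    then have "L2 * s / real q < pi" using pq by (simp add: divide_less_eq mult.commute)
    then show ?thesis unfolding h_def by (simp add: mult.commute)
  qed
  define m where "m = min (pi / w) (pi / h)"
  have sm: "s < m" unfolding m_def using sw sh wp by (simp add: less_divide_eq mult.commute)
  define k where "k = (s + m) / 2"
  have sk: "s < k" "k < m" unfolding k_def using sm by auto
  have kp: "k > 0" using sk sp by simp
  have kw: "k * w < pi"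
  proof -
    have "k < pi / w" using sk unfolding m_def by simp
    then show ?thesis using wp by (simp add: less_divide_eq)
  qed
  have kh: "k * h < pi"
  proof -
    have "k < pi / h" using sk unfolding m_def by simp
    then show ?thesis using wp by (simp add: less_divide_eq)
  qed
  have klam: "lam < k^2"
  proof -
    have "s^2 < k^2" using sk sp by (intro power_strict_mono) auto
    then show ?thesis unfolding s_def using lp by simp
  qed
  define Sset where "Sset = {k::nat. k \<ge> 1 \<and> robin_eig (sqrt A * a) (sqrt A / a) \<alpha> k \<le> lam}"
  have sub: "Sset \<subseteq> {1..p*q}"
  proof
    fix n assume "n \<in> Sset"
    then have n1: "n \<ge> 1" and ev: "robin_eig L1 L2 \<alpha> n \<le> lam" unfolding Sset_def L1_def L2_def by auto
    have "n \<le> p * q"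
    proof (rule ccontr)
      assume "\<not> n \<le> p * q"
      then have "p * q < n" by simp
      from eig_lower[OF wp(1) wp(2) pq kp kw kh _ this] al
      have "k^2 \<le> robin_eig L1 L2 \<alpha> n" unfolding Lw by simp
      with ev klam show False by simp
    qed
    with n1 show "n \<in> {1..p*q}" by simp
  qed
  have fin: "finite Sset" using sub by (rule finite_subset) simp
  have "card Sset \<le> card {1..p*q}" using sub by (rule card_mono[rotated]) simp
  then have "card Sset \<le> p * q" by simp
  then have "real (card Sset) \<le> real (p * q)" by (simp only: of_nat_le_iff)
  then have "real (card Sset) \<le> real p * real q" by simp
  also have "\<dots> \<le> (X + 1) * (Y + 1)"
    using pX qY pq by (intro mult_mono) auto
  also have "\<dots> = lam * A / pi\<^sup>2 + sqrt (lam * A) / pi * (a + 1 / a) + 1"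
  proof -
    have XY: "X * Y = lam * A / pi^2"
    proof -
      have "X * Y = (L1 * L2) * s^2 / pi^2" unfolding X_def Y_def by (simp add: power2_eq_square)
      also have "L1 * L2 = A" unfolding L1_def L2_def using Ap ap by simp
      also have "s^2 = lam" unfolding s_def using lp by simp
      finally show ?thesis by simp
    qed
    have XpY: "X + Y = sqrt (lam * A) / pi * (a + 1 / a)"
    proof -
      have "X + Y = s * (L1 + L2) / pi" unfolding X_def Y_def by (simp add: algebra_simps add_divide_distrib)
      also have "L1 + L2 = sqrt A * (a + 1/a)" unfolding L1_def L2_def by (simp add: algebra_simps)
      also have "s * (sqrt A * (a + 1/a)) / pi = sqrt (lam * A) / pi * (a + 1 / a)"
        unfolding s_def by (simp add: real_sqrt_mult)
      finally show ?thesis .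
    qed
    have "(X + 1) * (Y + 1) = X * Y + (X + Y) + 1" by (simp add: algebra_simps)
    then show ?thesis using XY XpY by simp
  qed
  finally show ?thesis using fin unfolding Sset_def by simp
qed

end
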